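(* There exists a probability distribution of a random pair $(x,y)\in\mathbb{R}^3\times\mathbb{R}$ with finite second moments, $\Sigma=\mathbb{E}[xx^\top]$ invertible and $\Sigma_{ii}>0$ for all $i$, such that the Naive Bayes weight vector satisfies $w^{\mathrm{NB}}\neq w^*$ and, for every binary feature tree on $\{1,2,3\}$ and every admissible choice of least-squares weights at its nodes, the tree predictor satisfies $w^{\mathrm{tree}}\neq w^*$, where $w^*=\Sigma^{-1}b$ is the least-squares linear predictor.
   Context: Let $(x,y)$ be a random pair with $x=(x_1,\dots,x_n)\in\mathbb{R}^n$, $y\in\mathbb{R}$, finite second moments, $\Sigma:=\mathbb{E}[xx^\top]$ invertible with all $\Sigma_{ii}>0$, and $b:=\mathbb{E}[xy]\in\mathbb{R}^n$. The least-squares linear predictor is $w^*:=\Sigma^{-1}b=\arg\min_{w}\mathbb{E}[(\langle w,x\rangle-y)^2]$. The Naive Bayes weight vector is $w^{\mathrm{NB}}\in\mathbb{R}^n$ with $w^{\mathrm{NB}}_i:=b_i/\Sigma_{ii}$. A feature tree on $\{1,\dots,n\}$ is a finite rooted tree in which every internal node has at least one child and whose leaves are in bijection with $\{1,\dots,n\}$; it is binary if every internal node has at most two children. Each node $v$ computes a prediction $p_v(x)$: the leaf labeled $i$ outputs $p_i(x)=w^{(0)}_i x_i$ with $w^{(0)}_i:=b_i/\Sigma_{ii}$; an internal node $v$ with children $c_1,\dots,c_k$ outputs $p_v(x)=\sum_{j=1}^k u^v_j\,p_{c_j}(x)$, where $u^v\in\mathbb{R}^k$ is any minimizer (an admissible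 choice) of $u\mapsto\mathbb{E}\big[(\sum_{j=1}^k u_j p_{c_j}(x)-y)^2\big]$. By induction every $p_v$ is a linear function of $x$; the tree predictor $w^{\mathrm{tree}}\in\mathbb{R}^n$ is the vector with $p_{\mathrm{root}}(x)=\langle w^{\mathrm{tree}},x\rangle$ for all $x$. *)

theory Defs
  imports "HOL-Probability.Probability"
begin

datatype 'i ftree = Leaf 'i | Node "'i ftree list"

fun leaves :: "'i ftree \<Rightarrow> 'i list" where
  "leaves (Leaf i) = [i]"
| "leaves (Node cs) = concat (map leaves cs)"

fun binary_ftree :: "'i ftree \<Rightarrow> bool" where
  "binary_ftree (Leaf i) = True"
| "binary_ftree (Node cs) = (cs \<noteq> [] \<and> length cs \<le> 2 \<and> (\<forall>c\<in>set cs. binary_ftree c))"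

definition feature_tree :: "'i::finite ftree \<Rightarrow> bool" where
  "feature_tree T \<longleftrightarrow> distinct (leaves T) \<and> set (leaves T) = UNIV"

definition Sigma_mat :: "((real^'n) \<times> real) measure \<Rightarrow> real^'n^'n" where
  "Sigma_mat M = (\<chi> i j. integral\<^sup>L M (\<lambda>z. fst z $ i * fst z $ j))"

definition b_vec :: "((real^'n) \<times> real) measure \<Rightarrow> real^'n" where
  "b_vec M = (\<chi> i. integral\<^sup>L M (\<lambda>z. fst z $ i * snd z))"

definition w_star :: "((real^'n) \<times> real) measure \<Rightarrow> real^'n" where
  "w_star M = matrix_inv (Sigma_mat M) *v b_vec M"

definition w_NB :: "((real^'n) \<times> real) measure \<Rightarrow> real^'n" where
  "w_NB M = (\<chi> i. b_vec M $ i / Sigma_mat M $ i $ i)"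

definition comb_risk :: "((real^'n) \<times> real) measure \<Rightarrow> (real^'n) list \<Rightarrow> real list \<Rightarrow> real" where
  "comb_risk M ws u =
     integral\<^sup>L M (\<lambda>z. ((\<Sum>j<length ws. u ! j * (ws ! j \<bullet> fst z)) - snd z)\<^sup>2)"

text \<open>tree_pred M T w: for some admissible choice of least-squares weights at the
  nodes of T, the node's prediction is x \<mapsto> <w, x>.\<close>
inductive tree_pred :: "((real^'n) \<times> real) measure \<Rightarrow> 'n ftree \<Rightarrow> real^'n \<Rightarrow> bool"
  for M where
  leaf: "tree_pred M (Leaf i) (\<chi> k. if k = i then b_vec M $ i / Sigma_mat M $ i $ i else 0)"
| node: "list_all2 (tree_pred M) cs ws \<Longrightarrow> length u = length cs \<Longrightarrow>
         (\<forall>u'. length u' = length cs \<longrightarrow> comb_risk M ws u \<le> comb_risk M ws u') \<Longrightarrow>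
         tree_pred M (Node cs) (\<Sum>j<length cs. u ! j *\<^sub>R ws ! j)"

end

theory Submission
  imports Defs
begin


definition P1 :: "(real^3) \<times> real" where "P1 = (vector [0,0,1], 1)"
definition P2 :: "(real^3) \<times> real" where "P2 = (vector [0,1,0], -1)"
definition P3 :: "(real^3) \<times> real" where "P3 = (vector [1,1,1], 2)"
definition MM :: "((real^3) \<times> real) measure" where
  "MM = distr (measure_pmf (pmf_of_set {P1,P2,P3})) borel id"

lemma P_distinct: "P1 \<noteq> P2" "P1 \<noteq> P3" "P2 \<noteq> P3"
  unfolding P1_def P2_def P3_def by (auto simp: vec_eq_iff forall_3)

lemma card_P: "card {P1,P2,P3} = 3"
  using P_distinct by simp

lemma int_M:
  fixes g :: "(real^3) \<times> real \<Rightarrow> real"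
  assumes "continuous_on UNIV g"
  shows "integral\<^sup>L MM g = (g P1 + g P2 + g P3) / 3"
proof -
  have "integral\<^sup>L MM g = integral\<^sup>L (measure_pmf (pmf_of_set {P1,P2,P3})) (\<lambda>x. g (id x))"
    unfolding MM_def
    by (rule integral_distr[of id _ borel g]) (auto intro: borel_measurable_continuous_onI assms)
  also have "\<dots> = (g P1 + g P2 + g P3) / 3"
    by (subst integral_pmf_of_set) (use P_distinct card_P in auto)
  finally show ?thesis .
qed

lemma integrable_M:
  assumes "continuous_on UNIV g"
  shows "integrable MM (g :: _ \<Rightarrow> real)"
  unfolding MM_def
  by (subst integrable_distr_eq) (auto intro: borel_measurable_continuous_onI assms integrable_measure_pmf_finite)

lemma prob_M: "prob_space MM"
  unfolding MM_def by (rule prob_space.prob_space_distr) (auto simp: prob_space_measure_pmf)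

lemma sets_M: "sets MM = sets borel"
  unfolding MM_def by simp

lemma Sigma_M: "Sigma_mat MM $ i $ j = (fst P1 $ i * fst P1 $ j + fst P2 $ i * fst P2 $ j + fst P3 $ i * fst P3 $ j) / 3"
  unfolding Sigma_mat_def by (simp add: int_M continuous_intros)

lemma b_M: "b_vec MM $ i = (fst P1 $ i * snd P1 + fst P2 $ i * snd P2 + fst P3 $ i * snd P3) / 3"
  unfolding b_vec_def by (simp add: int_M continuous_intros)

definition R :: "real^3 \<Rightarrow> real" where
  "R w = ((w$3 - 1)\<^sup>2 + (w$2 + 1)\<^sup>2 + (w$1 + w$2 + w$3 - 2)\<^sup>2) / 3"

lemma risk_M: "comb_risk MM ws u = R (\<Sum>j<length ws. u ! j *\<^sub>R ws ! j)"
proof -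
  let ?w = "\<Sum>j<length ws. u ! j *\<^sub>R ws ! j"
  have "(\<lambda>z. ((\<Sum>j<length ws. u ! j * (ws ! j \<bullet> fst z)) - snd z)\<^sup>2) = (\<lambda>z. (?w \<bullet> fst z - snd z)\<^sup>2)"
    by (simp add: inner_sum_left)
  then show ?thesis
    unfolding comb_risk_def
    by (simp add: int_M continuous_intros R_def P1_def P2_def P3_def inner_vec_def sum_3 algebra_simps)
qed

definition Sg :: "real^3^3" where "Sg = Sigma_mat MM"
definition Bi :: "real^3^3" where
  "Bi = (\<chi> i j. 3 * (if i = j then (if i = 1 then 3 else 1) else if i = 1 \<or> j = 1 then -1 else 0))"

lemma Sg_inv: "Sg ** Bi = mat 1" "Bi ** Sg = mat 1"
  by (auto simp: vec_eq_iff forall_3 Sg_def Sigma_M Bi_def matrix_matrix_mult_def sum_3 mat_def P1_def P2_def P3_def)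

definition wst :: "real^3" where "wst = vector [2, -1, 1]"

lemma wstar_M: "w_star MM = wst"
proof -
  have inv: "invertible Sg" using Sg_inv unfolding invertible_def by blast
  have mi: "matrix_inv Sg ** Sg = mat 1"
    unfolding matrix_inv_def by (rule someI2[of _ Bi]) (use Sg_inv in auto)
  have "b_vec MM = Sg *v wst"
    by (auto simp: vec_eq_iff forall_3 Sg_def Sigma_M b_M wst_def matrix_vector_mult_def sum_3 P1_def P2_def P3_def)
  then have "w_star MM = (matrix_inv Sg ** Sg) *v wst"
    unfolding w_star_def Sg_def[symmetric] by (simp add: matrix_vector_mul_assoc)
  then show ?thesis using mi by simp
qed



definition e0 :: "3 \<Rightarrow> real^3" where
  "e0 i = (\<chi> k. if k = i then b_vec MM $ i / Sigma_mat MM $ i $ i else 0)"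

lemma e0_vals: "e0 1 = vector [2,0,0]" "e0 2 = vector [0,1/2,0]" "e0 3 = vector [0,0,3/2]"
  by (auto simp: vec_eq_iff forall_3 e0_def b_M Sigma_M P1_def P2_def P3_def)

lemma e0_off: "k \<noteq> i \<Longrightarrow> e0 i $ k = 0"
  by (simp add: e0_def)

lemma e0_diag: "e0 i $ i \<noteq> 0"
  using exhaust_3[of i] by (auto simp: e0_vals)

lemma neq3[simp]: "(1::3) \<noteq> 2" "(1::3) \<noteq> 3" "(2::3) \<noteq> 3" "(2::3) \<noteq> 1" "(3::3) \<noteq> 1" "(3::3) \<noteq> 2"
  by simp_all

lemma setneq3[simp]: "{1,3} \<noteq> ({1,2}::3 set)" "{2,3} \<noteq> ({1,2}::3 set)" "{2,3} \<noteq> ({1,3}::3 set)"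
  by (auto simp: doubleton_eq_iff)

definition vp :: "3 set \<Rightarrow> real^3" where
  "vp S = (if S = {1,2} then vector [3,-1,0] else if S = {1,3} then vector [1,0,1]
           else vector [0,-1/3,5/3])"

definition L :: "real^3 \<Rightarrow> real^3 \<Rightarrow> real" where
  "L v d = 2/3*((v$3-1)*d$3 + (v$2+1)*d$2 + (v$1+v$2+v$3-2)*(d$1+d$2+d$3))"

definition Q :: "real^3 \<Rightarrow> real" where
  "Q d = ((d$3)\<^sup>2 + (d$2)\<^sup>2 + (d$1+d$2+d$3)\<^sup>2)/3"

lemma R_expand: "R (v + d) = R v + L v d + Q d"
  unfolding R_def L_def Q_def by (simp add: power2_eq_square field_simps)

lemma aux3: "((a::real)+b+c)/3 \<le> 0 \<Longrightarrow> 0\<le>a \<Longrightarrow> 0\<le>b \<Longrightarrow> 0\<le>c \<Longrightarrow> a=0 \<and> b=0 \<and> c=0"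
  by auto

lemma Q_zero: "Q d \<le> 0 \<Longrightarrow> d = 0"
proof -
  assume "Q d \<le> 0"
  moreover have "(d$3)\<^sup>2 \<ge> 0" "(d$2)\<^sup>2 \<ge> 0" "(d$1+d$2+d$3)\<^sup>2 \<ge> 0" by auto
  ultimately have "(d$3)\<^sup>2 = 0 \<and> (d$2)\<^sup>2 = 0 \<and> (d$1+d$2+d$3)\<^sup>2 = 0"
    unfolding Q_def by (rule aux3)
  then show "d = 0" by (auto simp: vec_eq_iff forall_3)
qed

lemma opt: "R w \<le> R v \<Longrightarrow> L v (w - v) = 0 \<Longrightarrow> w = v"
  using R_expand[of v "w - v"] Q_zero[of "w - v"] by simp

definition supp :: "real^3 \<Rightarrow> 3 set \<Rightarrow> bool" where
  "supp d S \<longleftrightarrow> (\<forall>k. k \<notin> S \<longrightarrow> d $ k = 0)"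

lemma card2_cases: "card (S::3 set) = 2 \<Longrightarrow> S = {1,2} \<or> S = {1,3} \<or> S = {2,3}"
proof -
  assume "card S = 2"
  then obtain x y where S: "S = {x,y}" "x \<noteq> y" unfolding card_2_iff by blast
  show ?thesis using exhaust_3[of x] exhaust_3[of y] S by (elim disjE) (auto simp: insert_commute)
qed

lemma L_e0: "supp d {i} \<Longrightarrow> L (e0 i) d = 0"
  using exhaust_3[of i] by (auto simp: supp_def L_def e0_vals forall_3)

lemma L_vp: "card S = 2 \<Longrightarrow> supp d S \<Longrightarrow> L (vp S) d = 0"
  apply (drule card2_cases)
  apply (auto simp: supp_def L_def vp_def forall_3)
  done

lemma supp_e0: "supp (e0 i) {i}"
  by (simp add: supp_def e0_off)

lemma supp_vp: "card S = 2 \<Longrightarrow> supp (vp S) S"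
  apply (drule card2_cases)
  apply (elim disjE)
  apply (auto simp: supp_def vp_def)
  apply (metis exhaust_3 vector_3)+
  done

lemma supp_scale: "supp d S \<Longrightarrow> supp (c *\<^sub>R d) S"
  by (simp add: supp_def)
lemma supp_add: "supp d S \<Longrightarrow> supp e S \<Longrightarrow> supp (d + e) S"
  by (simp add: supp_def)
lemma supp_diff: "supp d S \<Longrightarrow> supp e S \<Longrightarrow> supp (d - e) S"
  by (simp add: supp_def)
lemma supp_mono: "supp d S \<Longrightarrow> S \<subseteq> T \<Longrightarrow> supp d T"
  by (auto simp: supp_def)

lemma decomp2: "i \<noteq> j \<Longrightarrow> supp v {i,j} \<Longrightarrow>
   v = (v$i / e0 i $ i) *\<^sub>R e0 i + (v$j / e0 j $ j) *\<^sub>R e0 j"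
proof -
  assume ij: "i \<noteq> j" and s: "supp v {i,j}"
  show ?thesis
  proof (subst vec_eq_iff, intro allI)
    fix k
    show "v $ k = ((v$i / e0 i $ i) *\<^sub>R e0 i + (v$j / e0 j $ j) *\<^sub>R e0 j) $ k"
    proof (cases "k = i")
      case True then show ?thesis using ij e0_diag[of i] by (simp add: e0_off)
    next
      case False
      show ?thesis
      proof (cases "k = j")
        case True then show ?thesis using ij e0_diag[of j] by (simp add: e0_off)
      next
        case F2: False
        then show ?thesis using False s by (simp add: e0_off supp_def)
      qed
    qed
  qed
qed

lemma span_ne: "i \<notin> S \<Longrightarrow> card S = 2 \<Longrightarrow> a *\<^sub>R e0 i + b *\<^sub>R vp S \<noteq> wst"
proof
  assume "i \<notin> S" "card S = 2" and eq: "a *\<^sub>R e0 i + b *\<^sub>R vp S = wst"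
  have c: "(a *\<^sub>R e0 i + b *\<^sub>R vp S) $ k = wst $ k" for k using eq by simp
  from card2_cases[OF \<open>card S = 2\<close>] show False
  proof (elim disjE)
    assume S: "S = {1,2}"
    then have "i = 3" using \<open>i \<notin> S\<close> exhaust_3[of i] by auto
    then show False using c[of 1] c[of 2] S by (simp add: e0_vals vp_def wst_def)
  next
    assume S: "S = {1,3}"
    then have "i = 2" using \<open>i \<notin> S\<close> exhaust_3[of i] by auto
    then show False using c[of 1] c[of 3] S by (simp add: e0_vals vp_def wst_def)
  next
    assume S: "S = {2,3}"
    then have "i = 1" using \<open>i \<notin> S\<close> exhaust_3[of i] by auto
    then show False using c[of 2] c[of 3] S by (simp add: e0_vals vp_def wst_def)
  qed
qed



lemma leaves_ne: "binary_ftree T \<Longrightarrow> leaves T \<noteq> []"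
  by (induction T) (auto simp: neq_Nil_conv)

lemma card_le3: "card (S::3 set) \<le> 3"
proof -
  have "card S \<le> card (UNIV::3 set)" by (rule card_mono) auto
  then show ?thesis by simp
qed

lemma shape: "(S::3 set) \<noteq> {} \<Longrightarrow> (\<exists>i. S = {i}) \<or> card S = 2 \<or> card S = 3"
proof -
  assume "S \<noteq> {}"
  then have "card S \<ge> 1" by (simp add: Suc_leI card_gt_0_iff)
  moreover have "card S \<le> 3" by (rule card_le3)
  ultimately have "card S = 1 \<or> card S = 2 \<or> card S = 3" by linarith
  then show ?thesis by (auto simp: card_1_singleton_iff)
qed

definition tinv :: "3 set \<Rightarrow> real^3 \<Rightarrow> bool" where
  "tinv S w \<longleftrightarrow> (\<forall>i. S = {i} \<longrightarrow> w = e0 i) \<and> (card S = 2 \<longrightarrow> w = vp S) \<and>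
     (card S = 3 \<longrightarrow> (\<forall>t. t *\<^sub>R w \<noteq> wst))"

lemma tinv_single: "tinv {i} (e0 i)"
  by (auto simp: tinv_def)

lemma tinv_pair: "card S = 2 \<Longrightarrow> tinv S (vp S)"
  by (auto simp: tinv_def)

lemma tinv_full: "card S = 3 \<Longrightarrow> (\<And>t. t *\<^sub>R w \<noteq> wst) \<Longrightarrow> tinv S w"
  by (auto simp: tinv_def)

lemma tinv_singleD: "tinv {i} w \<Longrightarrow> w = e0 i"
  by (auto simp: tinv_def)
lemma tinv_pairD: "tinv S w \<Longrightarrow> card S = 2 \<Longrightarrow> w = vp S"
  by (auto simp: tinv_def)
lemma tinv_fullD: "tinv S w \<Longrightarrow> card S = 3 \<Longrightarrow> t *\<^sub>R w \<noteq> wst"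
  by (auto simp: tinv_def)

lemma unary_step:
  assumes S: "S \<noteq> {}" and I: "tinv S w1" and O: "R (u1 *\<^sub>R w1) \<le> R w1"
  shows "tinv S (u1 *\<^sub>R w1)"
proof -
  from shape[OF S] show ?thesis
  proof (elim disjE exE)
    fix i assume Si: "S = {i}"
    then have w1: "w1 = e0 i" using I tinv_singleD by blast
    have "L (e0 i) (u1 *\<^sub>R e0 i - e0 i) = 0"
      by (intro L_e0 supp_diff supp_scale supp_e0)
    then have "u1 *\<^sub>R e0 i = e0 i" using O w1 opt by blast
    then show ?thesis using Si w1 tinv_single by simp
  next
    assume c: "card S = 2"
    then have w1: "w1 = vp S" using I tinv_pairD by blast
    have "L (vp S) (u1 *\<^sub>R vp S - vp S) = 0"
      by (intro L_vp c supp_diff supp_scale supp_vp)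
    then have "u1 *\<^sub>R vp S = vp S" using O w1 opt by blast
    then show ?thesis using c w1 tinv_pair by simp
  next
    assume c: "card S = 3"
    show ?thesis
    proof (rule tinv_full[OF c])
      fix t show "t *\<^sub>R u1 *\<^sub>R w1 \<noteq> wst" using tinv_fullD[OF I c, of "t * u1"] by simp
    qed
  qed
qed

lemma pair_step:
  assumes ij: "i \<noteq> j" and O: "\<And>a b. R (u1 *\<^sub>R e0 i + u2 *\<^sub>R e0 j) \<le> R (a *\<^sub>R e0 i + b *\<^sub>R e0 j)"
  shows "u1 *\<^sub>R e0 i + u2 *\<^sub>R e0 j = vp {i,j}"
proof -
  have c: "card {i,j} = 2" using ij by simp
  let ?v = "vp {i,j}"
  have "?v = (?v$i / e0 i $ i) *\<^sub>R e0 i + (?v$j / e0 j $ j) *\<^sub>R e0 j"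
    by (rule decomp2[OF ij supp_vp[OF c]])
  then have O': "R (u1 *\<^sub>R e0 i + u2 *\<^sub>R e0 j) \<le> R ?v" using O by metis
  have si: "supp (e0 i) {i,j}" by (rule supp_mono[OF supp_e0]) auto
  have sj: "supp (e0 j) {i,j}" by (rule supp_mono[OF supp_e0]) auto
  have "L ?v (u1 *\<^sub>R e0 i + u2 *\<^sub>R e0 j - ?v) = 0"
    by (intro L_vp c supp_diff supp_add supp_scale supp_vp si sj)
  then show ?thesis using O' opt by blast
qed

lemma tree_inv:
  "tree_pred MM T w \<Longrightarrow> binary_ftree T \<Longrightarrow> distinct (leaves T) \<Longrightarrow> tinv (set (leaves T)) w"
proof (induction rule: tree_pred.induct)
  case (leaf i)
  then show ?case using tinv_single[of i] by (simp add: e0_def)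
next
  case (node cs ws u)
  have ne: "cs \<noteq> []" and len: "length cs \<le> 2" and bin: "\<forall>c\<in>set cs. binary_ftree c"
    using node.prems(1) by auto
  have dist: "distinct (concat (map leaves cs))" using node.prems(2) by simp
  have lenws: "length ws = length cs" using list_all2_lengthD[OF node.IH] by simp
  have "length cs = 1 \<or> length cs = 2" using ne len by (cases cs) (auto simp: le_Suc_eq)
  then show ?case
  proof
    assume l1: "length cs = 1"
    then obtain c1 where cs: "cs = [c1]" by (auto simp: length_Suc_conv)
    obtain w1 where ws: "ws = [w1]" using lenws l1 by (auto simp: length_Suc_conv)
    obtain u1 where u: "u = [u1]" using node.hyps(1) l1 by (auto simp: length_Suc_conv)
    have IH: "tinv (set (leaves c1)) w1"
      using node.IH bin dist by (simp add: cs ws)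
    have "comb_risk MM ws u \<le> comb_risk MM ws [1]" using node.hyps(2) l1 by auto
    then have O: "R (u1 *\<^sub>R w1) \<le> R w1" by (simp add: risk_M ws u)
    have "tinv (set (leaves c1)) (u1 *\<^sub>R w1)"
      by (rule unary_step[OF _ IH O]) (use leaves_ne bin cs in auto)
    then show ?case by (simp add: cs ws u)
  next
    assume l2: "length cs = 2"
    then obtain c1 c2 where cs: "cs = [c1, c2]" by (auto simp: length_Suc_conv numeral_2_eq_2)
    obtain w1 w2 where ws: "ws = [w1, w2]" using lenws l2 by (auto simp: length_Suc_conv numeral_2_eq_2)
    obtain u1 u2 where u: "u = [u1, u2]" using node.hyps(1) l2 by (auto simp: length_Suc_conv numeral_2_eq_2)
    have IH1: "tinv (set (leaves c1)) w1" and IH2: "tinv (set (leaves c2)) w2"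
      using node.IH bin dist by (simp_all add: cs ws)
    define S1 where "S1 = set (leaves c1)"
    define S2 where "S2 = set (leaves c2)"
    have I1: "tinv S1 w1" using IH1 by (simp add: S1_def)
    have I2: "tinv S2 w2" using IH2 by (simp add: S2_def)
    have ne1: "S1 \<noteq> {}" and ne2: "S2 \<noteq> {}" using leaves_ne bin cs S1_def S2_def by auto
    have disj: "S1 \<inter> S2 = {}" using dist by (simp add: cs S1_def S2_def)
    have S: "set (leaves (Node cs)) = S1 \<union> S2" by (simp add: cs S1_def S2_def)
    have cardS: "card (S1 \<union> S2) = card S1 + card S2" using disj by (simp add: card_Un_disjoint)
    have le3: "card S1 + card S2 \<le> 3" using card_le3[of "S1 \<union> S2"] cardS by simp
    have wdef: "(\<Sum>j<length cs. u ! j *\<^sub>R ws ! j) = u1 *\<^sub>R w1 + u2 *\<^sub>R w2"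
      by (simp add: cs ws u numeral_2_eq_2)
    have O: "R (u1 *\<^sub>R w1 + u2 *\<^sub>R w2) \<le> R (a *\<^sub>R w1 + b *\<^sub>R w2)" for a b
    proof -
      have "comb_risk MM ws u \<le> comb_risk MM ws [a, b]" using node.hyps(2) l2 by auto
      then show ?thesis by (simp add: risk_M ws u numeral_2_eq_2)
    qed
    have c1: "card S1 \<ge> 1" and c2: "card S2 \<ge> 1" using ne1 ne2
      by (simp_all add: Suc_leI card_gt_0_iff)
    have goal: "tinv (S1 \<union> S2) (u1 *\<^sub>R w1 + u2 *\<^sub>R w2)"
    proof (cases "card S1 = 1")
      case True
      then obtain i where Si: "S1 = {i}" by (auto simp: card_1_singleton_iff)
      have w1: "w1 = e0 i" using I1 Si tinv_singleD by blast
      show ?thesis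
      proof (cases "card S2 = 1")
        case True
        then obtain j where Sj: "S2 = {j}" by (auto simp: card_1_singleton_iff)
        have w2: "w2 = e0 j" using I2 Sj tinv_singleD by blast
        have ij: "i \<noteq> j" using disj Si Sj by auto
        have "u1 *\<^sub>R e0 i + u2 *\<^sub>R e0 j = vp {i,j}"
          by (rule pair_step[OF ij]) (use O w1 w2 in auto)
        then show ?thesis using tinv_pair[of "{i,j}"] ij Si Sj w1 w2 by (simp add: insert_commute)
      next
        case False
        then have c2': "card S2 = 2" using le3 True c2 by linarith
        have w2: "w2 = vp S2" using I2 c2' tinv_pairD by blast
        have iS2: "i \<notin> S2" using disj Si by auto
        show ?thesis
        proof (rule tinv_full)
          show "card (S1 \<union> S2) = 3" using cardS True c2' by simp
          fix t show "t *\<^sub>R (u1 *\<^sub>R w1 + u2 *\<^sub>R w2) \<noteq> wst"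
            using span_ne[OF iS2 c2', of "t*u1" "t*u2"] w1 w2 by (simp add: scaleR_add_right)
        qed
      qed
    next
      case False
      then have c1': "card S1 = 2" and c2': "card S2 = 1" using le3 c1 c2 by linarith+
      then obtain i where Si: "S2 = {i}" by (auto simp: card_1_singleton_iff)
      have w2: "w2 = e0 i" using I2 Si tinv_singleD by blast
      have w1: "w1 = vp S1" using I1 c1' tinv_pairD by blast
      have iS1: "i \<notin> S1" using disj Si by auto
      show ?thesis
      proof (rule tinv_full)
        show "card (S1 \<union> S2) = 3" using cardS c1' c2' by simp
        fix t show "t *\<^sub>R (u1 *\<^sub>R w1 + u2 *\<^sub>R w2) \<noteq> wst"
          using span_ne[OF iS1 c1', of "t*u2" "t*u1"] w1 w2 by (simp add: scaleR_add_right add.commute)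
      qed
    qed
    then show ?case using S wdef by simp
  qed
qed


theorem proposition2:
  "\<exists>M :: ((real^3) \<times> real) measure.
     prob_space M \<and> sets M = sets borel \<and>
     (\<forall>i. integrable M (\<lambda>z. (fst z $ i)\<^sup>2)) \<and> integrable M (\<lambda>z. (snd z)\<^sup>2) \<and>
     invertible (Sigma_mat M) \<and> (\<forall>i. Sigma_mat M $ i $ i > 0) \<and>
     w_NB M \<noteq> w_star M \<and>
     (\<forall>T w. feature_tree T \<and> binary_ftree T \<and> tree_pred M T w \<longrightarrow> w \<noteq> w_star M)"
proof (intro exI[of _ MM] conjI allI impI)
  show "prob_space MM" by (rule prob_M)
  show "sets MM = sets borel" by (rule sets_M)
  fix i :: 3
  show "integrable MM (\<lambda>z. (fst z $ i)\<^sup>2)" by (intro integrable_M continuous_intros)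
next
  show "integrable MM (\<lambda>z. (snd z)\<^sup>2)" by (intro integrable_M continuous_intros)
  show "invertible (Sigma_mat MM)" using Sg_inv unfolding invertible_def Sg_def by blast
next
  fix i :: 3
  show "Sigma_mat MM $ i $ i > 0"
    using exhaust_3[of i] by (auto simp: Sigma_M P1_def P2_def P3_def)
next
  have "w_NB MM $ 2 \<noteq> w_star MM $ 2"
    by (simp add: wstar_M wst_def w_NB_def b_M Sigma_M P1_def P2_def P3_def)
  then show "w_NB MM \<noteq> w_star MM" by metis
next
  fix T w assume H: "feature_tree T \<and> binary_ftree T \<and> tree_pred MM T w"
  have ti: "tinv (set (leaves T)) w" using tree_inv[of T w] H unfolding feature_tree_def by blast
  have "set (leaves T) = UNIV" using H unfolding feature_tree_def by blast
  then have "tinv UNIV w" using ti by simp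
  then have "1 *\<^sub>R w \<noteq> wst" by (rule tinv_fullD) simp
  then show "w \<noteq> w_star MM" by (simp add: wstar_M)
qed

end
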